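(* Let $c,d\in\mathbb{R}$ with $c,d>0$. Then: (1) Let $j\in\mathbb{R}$ with $j>0$. The running time of Quicksort in the worst case, i.e. the unique solution $T\in\mathcal{RT}_c$ of $T(1)=c$, $T(n)=T(n-1)+jn$ for $n\ge2$, belongs to $\mathcal{O}(g_k)$, where $k=\max\left(\frac c4+\frac j2,\frac{3j}{5}\right)$ and, for $r>0$, $g_r(1)=c$ and $g_r(n)=rn^2$ for $n\ge2$. (2) The running time of Largetwo in the average case, i.e. the unique solution $T\in\mathcal{RT}_c$ of $T(1)=c$, $T(n)=T(n-1)+2-\frac1n$ for $n\ge2$, belongs to $\mathcal{O}(g_k)$, where $k=\max\left(\frac{2c+3}{2+2d},1\right)$ and, for $r>0$, $g_r(1)=c$ and $g_r(n)=r\,(2(n-1)-\log_2 n+d)$ for $n\ge2$.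
   Context: $\mathbb{N}$ is the set of positive integers, $\mathcal{RT}$ the set of functions $\mathbb{N}\to(0,\infty]$, and $\mathcal{RT}_c=\{f\in\mathcal{RT}:f(1)=c\}$. For $f,g\in\mathcal{RT}$, $f\in\mathcal{O}(g)$ means there exist $n_0\in\mathbb{N}$ and $C\ge0$ with $f(n)\le Cg(n)$ for all $n\ge n_0$. The running times of these algorithms as functions of input size $n$ are modeled as the solutions of the stated recurrences, with $c$ the cost of the base case (Largetwo finds the two largest entries of an array of size $n$). *)

theory Defs
  imports Complex_Main
begin

text \<open>Running-time functions are modelled as functions nat => real; only the values at
  positive integers n >= 1 matter. Big-O in the paper's sense (on the positive integers).\<close>
definition bigO_RT :: "(nat \<Rightarrow> real) \<Rightarrow> (nat \<Rightarrow> real) \<Rightarrow> bool" where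
  "bigO_RT f g \<longleftrightarrow> (\<exists>n0::nat. n0 \<ge> 1 \<and> (\<exists>C::real. C \<ge> 0 \<and> (\<forall>n\<ge>n0. f n \<le> C * g n)))"

definition g_quick :: "real \<Rightarrow> real \<Rightarrow> nat \<Rightarrow> real" where
  "g_quick c r n = (if n = 1 then c else r * (real n)^2)"

definition g_largetwo :: "real \<Rightarrow> real \<Rightarrow> real \<Rightarrow> nat \<Rightarrow> real" where
  "g_largetwo c d r n = (if n = 1 then c else r * (2 * (real n - 1) - log 2 (real n) + d))"

end

theory Submission
  imports Defs
begin

lemma pow_ge: "n \<ge> 1 \<Longrightarrow> real n \<le> 2 ^ (n - 1)"
proof (induction n rule: dec_induct)
  case base then show ?case by simp
next
  case (step m)
  have "(1::real) \<le> 2^(m-1)" by simp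
  moreover have "real m \<le> 2^(m-1)" by (rule step.IH)
  moreover have "real (Suc m) = real m + 1" by simp
  ultimately have "real (Suc m) \<le> 2 * 2^(m-1)" by linarith
  also have "2 * (2::real)^(m-1) = 2^(Suc m - 1)" using step(1)
    by (cases m) auto
  finally show ?case .
qed

lemma log_le: "n \<ge> 1 \<Longrightarrow> log 2 (real n) \<le> real n - 1"
proof -
  assume n: "n \<ge> 1"
  have "log 2 (real n) \<le> log 2 (2 ^ (n-1))"
    using pow_ge[OF n] n by (subst log_le_cancel_iff) auto
  also have "\<dots> = real (n - 1)" by (simp add: log_nat_power)
  finally show ?thesis using n by simp
qed

lemma quick_bound:
  assumes "j > 0" "c > 0" "T 1 = c" "\<forall>n\<ge>2. T n = T (n - 1) + j * real n"
  shows "n \<ge> 1 \<Longrightarrow> T n \<le> (c + j) * (real n)^2"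
proof (induction n rule: dec_induct)
  case base then show ?case using assms by simp
next
  case (step m)
  have "T (Suc m) = T m + j * real (Suc m)" using assms(4) step(1) by auto
  also have "\<dots> \<le> (c+j) * (real m)^2 + j * real (Suc m)" using step by simp
  also have "\<dots> \<le> (c + j) * (real (Suc m))^2"
  proof -
    have m1: "real m \<ge> 1" using step(1) by simp
    have "j * real (Suc m) \<le> j * (2 * real m + 1)"
      using assms(1) m1 by (intro mult_left_mono) auto
    also have "\<dots> \<le> (c+j) * (2 * real m + 1)"
      using assms(2) m1 by (intro mult_right_mono) auto
    finally have "j * real (Suc m) \<le> (c+j) * (2 * real m + 1)" .
    then show ?thesis by (simp add: power2_eq_square algebra_simps)
  qed
  finally show ?case .
qed

lemma large_bound:
  assumes "T 1 = c" "\<forall>n\<ge>2. T n = T (n - 1) + 2 - 1 / real n"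
  shows "n \<ge> 1 \<Longrightarrow> T n \<le> c + 2 * (real n - 1)"
proof (induction n rule: dec_induct)
  case base then show ?case using assms by simp
next
  case (step m)
  have "T (Suc m) = T m + 2 - 1 / real (Suc m)" using assms(2) step(1) by auto
  also have "\<dots> \<le> T m + 2" by simp
  finally show ?case using step by simp
qed

lemma aux: "(c::real) > 0 \<Longrightarrow> (c::real) \<le> c*x \<Longrightarrow> 1 \<le> x \<Longrightarrow> c + 2*x \<le> 2*(c+2)*x"
proof -
  assume a: "c > 0" "c \<le> c*x" "1 \<le> x"
  have "2*(c+2)*x = 2*(c*x) + 4*x" by (simp add: algebra_simps)
  then show ?thesis using a by linarith
qed

theorem corollary13:
  fixes c d :: real
  assumes c_pos: "c > 0" and d_pos: "d > 0"
  shows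
    "(\<forall>(j::real) (T::nat \<Rightarrow> real).
        j > 0 \<longrightarrow> T 1 = c \<longrightarrow> (\<forall>n\<ge>2. T n = T (n - 1) + j * real n) \<longrightarrow>
        bigO_RT T (g_quick c (max (c / 4 + j / 2) (3 * j / 5))))
     \<and>
     (\<forall>T::nat \<Rightarrow> real.
        T 1 = c \<longrightarrow> (\<forall>n\<ge>2. T n = T (n - 1) + 2 - 1 / real n) \<longrightarrow>
        bigO_RT T (g_largetwo c d (max ((2 * c + 3) / (2 + 2 * d)) 1)))"
proof (intro conjI allI impI)
  fix j :: real and T :: "nat \<Rightarrow> real"
  assume j: "j > 0" and T1: "T 1 = c" and rec: "\<forall>n\<ge>2. T n = T (n - 1) + j * real n"
  define k where "k = max (c / 4 + j / 2) (3 * j / 5)"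
  have k: "k > 0" using j c_pos unfolding k_def by simp
  show "bigO_RT T (g_quick c (max (c / 4 + j / 2) (3 * j / 5)))"
    unfolding bigO_RT_def k_def[symmetric]
  proof (intro exI conjI allI impI)
    show "(2::nat) \<ge> 1" by simp
    show "(c + j) / k \<ge> 0" using k j c_pos by simp
    fix n :: nat assume n: "n \<ge> 2"
    have "T n \<le> (c + j) * (real n)^2" using quick_bound[OF j c_pos T1 rec] n by simp
    also have "\<dots> = (c + j) / k * g_quick c k n" using n k by (simp add: g_quick_def)
    finally show "T n \<le> (c + j) / k * g_quick c k n" .
  qed
next
  fix T :: "nat \<Rightarrow> real"
  assume T1: "T 1 = c" and rec: "\<forall>n\<ge>2. T n = T (n - 1) + 2 - 1 / real n"
  define k where "k = max ((2 * c + 3) / (2 + 2 * d)) 1"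
  have k: "k \<ge> 1" unfolding k_def by simp
  show "bigO_RT T (g_largetwo c d (max ((2 * c + 3) / (2 + 2 * d)) 1))"
    unfolding bigO_RT_def k_def[symmetric]
  proof (intro exI conjI allI impI)
    show "(2::nat) \<ge> 1" by simp
    show "2 * (c + 2) \<ge> 0" using c_pos by simp
    fix n :: nat assume n: "n \<ge> 2"
    have lg: "log 2 (real n) \<le> real n - 1" using log_le n by simp
    have "T n \<le> c + 2 * (real n - 1)" using large_bound[OF T1 rec] n by simp
    also have "\<dots> \<le> 2 * (c + 2) * (real n - 1)"
    proof -
      have n1: "real n - 1 \<ge> 1" using n by simp
      have "c * 1 \<le> c * (real n - 1)" using c_pos n1 by (intro mult_left_mono) auto
      then have "c \<le> c * (real n - 1)" by simp
      moreover have "2 * (c + 2) * (real n - 1) = 2 * (c * (real n - 1)) + 4 * (real n - 1)"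
        by (simp add: algebra_simps)
      ultimately show ?thesis using n1 c_pos aux[of c "real n - 1"] by simp
    qed
    also have "\<dots> \<le> 2 * (c + 2) * (2 * (real n - 1) - log 2 (real n) + d)"
      using lg d_pos c_pos by (intro mult_left_mono) auto
    also have "\<dots> \<le> 2 * (c + 2) * g_largetwo c d k n"
    proof -
      have X: "2 * (real n - 1) - log 2 (real n) + d \<ge> 0" using lg n d_pos by simp
      have "1 * (2 * (real n - 1) - log 2 (real n) + d) \<le> k * (2 * (real n - 1) - log 2 (real n) + d)"
        using X k by (intro mult_right_mono) auto
      then have "2 * (real n - 1) - log 2 (real n) + d \<le> g_largetwo c d k n"
        unfolding g_largetwo_def using n by simp
      then show ?thesis using c_pos by (intro mult_left_mono) auto
    qed
    finally show "T n \<le> 2 * (c + 2) * g_largetwo c d k n" .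
  qed
qed

end
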